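(* Let $d,n$ be positive integers with $d\le n$. Then $\mathcal{C}_d\subseteq\mathbb{Z}_{2^n}$ does not contain a projective $d$-cube, i.e.\ there is no multiset $S$ of $d$ elements of $\mathbb{Z}_{2^n}$ with $\Sigma^*S\subseteq\mathcal{C}_d$.
   Context: For a multiset $S=\{a_1,\dots,a_d\}$ of (not necessarily distinct) elements of $\mathbb{Z}_{2^n}$, $\Sigma^*S=\{\sum_{i\in I}a_i \bmod 2^n:\emptyset\ne I\subseteq[d]\}$. Layers: for $1\le i\le n$, $L_i=\{x\in\mathbb{Z}_{2^n}: x\equiv 2^{i-1}\pmod{2^i}\}$, $L_{n+1}=\{0\}$. Define index sets $I_1=\emptyset$ and, for $d\ge2$ with $\ell$ the largest integer with $2^\ell\le d$, $I_d=\{1,\dots,\ell\}\cup\{j+\ell+1: j\in I_{d-2^\ell+1}\}$; set $\mathcal{C}_d=\bigcup_{i\in I_d}L_i$ (for $d\le n$ all indices are at most $n$). *)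

theory Defs
  imports Main "HOL-Library.Multiset" "HOL-Library.Discrete_Functions"
begin

text \<open>Z_{2^n} is represented by the residues {0..<2^n}.\<close>

definition subsums :: "nat \<Rightarrow> nat multiset \<Rightarrow> nat set" where
  "subsums n S = {sum_mset T mod 2^n | T. T \<subseteq># S \<and> T \<noteq> {#}}"

definition layer :: "nat \<Rightarrow> nat \<Rightarrow> nat set" where
  "layer n i = (if i = n + 1 then {0}
     else {x. x < 2^n \<and> x mod 2^i = 2^(i - 1)})"

text \<open>largest l with 2^l <= d (for d >= 1) is floor_log d\<close>

function Iset :: "nat \<Rightarrow> nat set" where
  "Iset d = (if d \<le> 1 then {}
     else {1..floor_log d} \<union> (\<lambda>j. j + floor_log d + 1) ` Iset (d - 2 ^ floor_log d + 1))"
  by auto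
termination
proof (relation "measure id")
  fix d :: nat
  assume "\<not> d \<le> 1"
  hence d: "d \<ge> 2" by simp
  have "floor_log d \<ge> 1" using floor_log_rec[OF d] by simp
  hence "2 ^ floor_log d \<ge> (2::nat)"
    by (metis power_increasing power_one_right zero_less_numeral one_le_numeral)
  moreover have "2 ^ floor_log d \<le> d" using d floor_log_exp2_le by simp
  ultimately show "(d - 2 ^ floor_log d + 1, d) \<in> measure id" by simp
qed simp

definition Cset :: "nat \<Rightarrow> nat \<Rightarrow> nat set" where
  "Cset n d = (\<Union>i\<in>Iset d. layer n i)"

end

theory Submission
  imports Defs "HOL-Library.Multiset"
begin

definition sp :: "int \<Rightarrow> int set \<Rightarrow> int set \<Rightarrow> int set" where
  "sp N A B = (\<lambda>(a,b). (a+b) mod N) ` (A \<times> B)"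

lemma sp_memI: "a \<in> A \<Longrightarrow> b \<in> B \<Longrightarrow> z = (a+b) mod N \<Longrightarrow> z \<in> sp N A B"
  unfolding sp_def by (auto intro!: image_eqI[where x="(a,b)"])

lemma sp_memE: assumes "z \<in> sp N A B" obtains a b where "a \<in> A" "b \<in> B" "z = (a+b) mod N"
  using assms unfolding sp_def by auto

lemma finite_sp: "finite A \<Longrightarrow> finite B \<Longrightarrow> finite (sp N A B)"
  unfolding sp_def by simp

lemma two_pow_odd_decomp:
  fixes b :: nat
  assumes "0 < b"
  shows "\<exists>v u. b = 2^v * u \<and> odd u"
  using assms
proof (induction b rule: less_induct)
  case (less b)
  show ?case
  proof (cases "even b")
    case True
    then obtain c where c: "b = 2*c" by blast
    with less.prems have "0 < c" "c < b" by auto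
    from less.IH[OF \<open>c < b\<close> \<open>0 < c\<close>] obtain v u where "c = 2^v*u" "odd u" by blast
    with c have "b = 2^(Suc v) * u" by simp
    with \<open>odd u\<close> show ?thesis by blast
  next
    case False
    then have "b = 2^0 * b" by simp
    with False show ?thesis by blast
  qed
qed

lemma pow2_mult_hit:
  fixes b :: nat
  assumes "0 < b" "b < 2^k"
  shows "\<exists>m::nat. (m*b) mod 2^k = 2^(k-1)"
proof -
  obtain v u where vu: "b = 2^v * u" "odd u" using two_pow_odd_decomp[OF assms(1)] by blast
  have "u \<ge> 1" using vu(2) by (cases u) auto
  hence "2^v \<le> b" using vu(1) by simp
  hence "2^v < (2::nat)^k" using assms(2) by linarith
  hence vk: "v < k" by simp
  define m where "m = (2::nat)^(k-1-v)"
  have "m * b = 2^(k-1-v) * 2^v * u" using vu(1) m_def by simp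
  also have "\<dots> = 2^(k-1) * u" using vk by (simp add: power_add[symmetric])
  finally have mb: "m*b = 2^(k-1) * u" .
  have k2: "(2::nat)^k = 2^(k-1) * 2" using vk
    by (cases k) auto
  have "(m*b) mod 2^k = (2^(k-1) * u) mod (2^(k-1) * 2)" using mb k2 by simp
  also have "\<dots> = 2^(k-1) * (u mod 2)" by (rule mod_mult_mult1)
  also have "\<dots> = 2^(k-1)" using vu(2) by (simp add: odd_iff_mod_2_eq_one)
  finally show ?thesis by blast
qed

lemma pow2_mult_hit_int:
  fixes b :: int
  assumes "0 < b" "b < 2^k"
  shows "\<exists>m::nat. (int m * b) mod 2^k = 2^(k-1)"
proof -
  have "0 < nat b" "nat b < 2^k" using assms by (auto simp: nat_less_iff)
  then obtain m where m: "(m * nat b) mod 2^k = 2^(k-1)" using pow2_mult_hit by blast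
  have "int ((m * nat b) mod 2^k) = (int m * b) mod 2^k"
    using assms by (simp add: zmod_int)
  with m show ?thesis by (metis of_nat_numeral of_nat_power)
qed

lemma kts:
  fixes A B :: "int set"
  assumes k: "1 \<le> k" and fB: "finite B" and fA: "finite A"
    and AN: "A \<subseteq> {0..<2^k}" and BN: "B \<subseteq> {0..<2^k}"
    and A0: "0 \<in> A" and B0: "0 \<in> B" and hn: "2^(k-1) \<notin> sp (2^k) A B"
  shows "card A + card B \<le> card (sp (2^k) A B) + 1"
  using fB fA AN BN A0 B0 hn
proof (induction "card B" arbitrary: A B rule: less_induct)
  case less
  define N :: int where "N = 2^k"
  have Npos: "0 < N" using N_def by simp
  have fsp: "finite (sp N A B)" using less.prems(1,2) by (simp add: finite_sp)
  show ?case
  proof (cases "B = {0}")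
    case True
    have "sp N A B = A"
    proof
      show "sp N A B \<subseteq> A"
      proof
        fix z assume "z \<in> sp N A B"
        then obtain a c where ac: "a \<in> A" "c \<in> B" "z = (a+c) mod N" by (rule sp_memE)
        have "c = 0" using ac(2) True by simp
        moreover have "0 \<le> a" "a < N" using ac(1) less.prems(3) N_def by auto
        ultimately have "z = a" using ac(3) by simp
        thus "z \<in> A" using ac(1) by simp
      qed
      show "A \<subseteq> sp N A B"
      proof
        fix a assume "a \<in> A"
        hence "0 \<le> a" "a < N" using less.prems(3) unfolding N_def by auto
        hence "a = (a+0) mod N" by simp
        thus "a \<in> sp N A B" using \<open>a \<in> A\<close> True by (intro sp_memI[of a A 0]) auto
      qed
    qed
    thus ?thesis using True N_def by simp
  next
    case False
    then obtain b where b: "b \<in> B" "b \<noteq> 0" using less.prems(6) by blast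
    show ?thesis
    proof (cases "\<exists>e\<in>A. \<exists>b'\<in>B. (b'+e) mod N \<notin> A")
      case True
      then obtain e b' where e: "e \<in> A" "b' \<in> B" "(b'+e) mod N \<notin> A" by blast
      define T where "T = (\<lambda>x. (x+e) mod N) ` B"
      define A' where "A' = A \<union> T"
      define B' where "B' = {x\<in>B. (x+e) mod N \<in> A}"
      have eN: "0 \<le> e" "e < N" using e(1) less.prems(3) N_def by auto
      have injT: "inj_on (\<lambda>x. (x+e) mod N) B"
      proof (rule inj_onI)
        fix x y assume xy: "x \<in> B" "y \<in> B" "(x+e) mod N = (y+e) mod N"
        have "((x+e) - e) mod N = ((y+e) - e) mod N" using xy(3) by (metis mod_diff_left_eq)
        hence "x mod N = y mod N" by simp
        moreover have "x mod N = x" "y mod N = y" using xy(1,2) less.prems(4) N_def by auto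
        ultimately show "x = y" by simp
      qed
      have cardT: "card T = card B" unfolding T_def using injT card_image by blast
      have fT: "finite T" using less.prems(1) T_def by simp
      have B'sub: "B' \<subset> B" using e(2,3) B'_def by auto
      have cardB': "card B' < card B" using B'sub less.prems(1) by (simp add: psubset_card_mono)
      have cardB'2: "card B' = card (T \<inter> A)"
      proof -
        have "(\<lambda>x. (x+e) mod N) ` B' = T \<inter> A" unfolding T_def B'_def by auto
        moreover have "inj_on (\<lambda>x. (x+e) mod N) B'" using injT B'_def by (auto intro: inj_on_subset)
        ultimately show ?thesis by (metis card_image)
      qed
      have cardA': "card A' = card A + card (T - A)"
      proof -
        have "A' = A \<union> (T - A)" unfolding A'_def by blast
        moreover have "card (A \<union> (T - A)) = card A + card (T - A)"
          using less.prems(2) fT by (intro card_Un_disjoint) auto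
        ultimately show ?thesis by simp
      qed
      have "card T = card (T - A) + card (T \<inter> A)"
      proof -
        have "T = (T - A) \<union> (T \<inter> A)" by blast
        hence "card T = card ((T - A) \<union> (T \<inter> A))" by simp
        also have "\<dots> = card (T - A) + card (T \<inter> A)"
          using fT by (intro card_Un_disjoint) auto
        finally show ?thesis .
      qed
      hence sumeq: "card A' + card B' = card A + card B" using cardA' cardB'2 cardT by linarith
      have A'N: "A' \<subseteq> {0..<2^k}" using less.prems(3) unfolding A'_def T_def N_def by auto
      have B'N: "B' \<subseteq> {0..<2^k}" using less.prems(4) unfolding B'_def by auto
      have A'0: "0 \<in> A'" using less.prems(5) A'_def by auto
      have B'0: "0 \<in> B'" unfolding B'_def using less.prems(6) e(1) eN by simp
      have spsub: "sp N A' B' \<subseteq> sp N A B"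
      proof
        fix z assume "z \<in> sp N A' B'"
        then obtain a x where ax: "a \<in> A'" "x \<in> B'" "z = (a+x) mod N" by (rule sp_memE)
        show "z \<in> sp N A B"
        proof (cases "a \<in> A")
          case True
          moreover have "x \<in> B" using ax(2) B'_def by simp
          ultimately show ?thesis using ax(3) by (intro sp_memI) auto
        next
          case False
          then obtain y where y: "y \<in> B" "a = (y+e) mod N" using ax(1) A'_def T_def by auto
          have xe: "(x+e) mod N \<in> A" using ax(2) B'_def by simp
          have "z = (x + e + y) mod N" using ax(3) y(2) by (simp add: mod_add_right_eq add_ac)
          also have "\<dots> = ((x+e) mod N + y) mod N" by (simp add: mod_add_left_eq)
          finally have "z = ((x+e) mod N + y) mod N" .
          thus ?thesis using xe y(1) by (intro sp_memI) auto
        qed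
      qed
      have fB': "finite B'" using less.prems(1) B'_def by simp
      have fA': "finite A'" using less.prems(2) fT A'_def by simp
      have hn': "2^(k-1) \<notin> sp (2^k) A' B'" using spsub less.prems(7) N_def by auto
      have "card A' + card B' \<le> card (sp (2^k) A' B') + 1"
        using less.hyps[OF cardB' fB' fA' A'N B'N A'0 B'0 hn'] .
      moreover have "card (sp N A' B') \<le> card (sp N A B)" using spsub fsp by (simp add: card_mono)
      ultimately show ?thesis using sumeq N_def by simp
    next
      case False
      hence clos: "\<forall>e\<in>A. \<forall>b'\<in>B. (b'+e) mod N \<in> A" by blast
      have bN: "0 < b" "b < 2^k" using b less.prems(4) by force+
      have mult: "(int m * b) mod N \<in> A" for m :: nat
      proof (induction m)
        case 0 then show ?case using less.prems(5) by simp
      next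
        case (Suc m)
        have "(int (Suc m) * b) mod N = (b + (int m * b) mod N) mod N"
          by (simp add: algebra_simps mod_add_right_eq)
        thus ?case using clos Suc.IH b(1) by metis
      qed
      obtain m where "(int m * b) mod 2^k = 2^(k-1)" using pow2_mult_hit_int[OF bN] by blast
      hence hA: "2^(k-1) \<in> A" using mult[of m] N_def by simp
      have "(2::int)^(k-1) < 2^k" using k by simp
      hence "(2^(k-1) + 0) mod (2::int)^k = 2^(k-1)" by simp
      hence "2^(k-1) \<in> sp (2^k) A B" using hA less.prems(6) by (intro sp_memI) auto
      thus ?thesis using less.prems(7) by simp
    qed
  qed
qed

definition SS :: "int \<Rightarrow> nat multiset \<Rightarrow> int set" where
  "SS N T = {int (sum_mset A) mod N | A. A \<subseteq># T}"

definition negs :: "int \<Rightarrow> int set \<Rightarrow> int set" where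
  "negs N X = (\<lambda>x. (-x) mod N) ` X"

definition MM :: "int \<Rightarrow> nat multiset \<Rightarrow> int set" where
  "MM N T = SS N T \<union> negs N (SS N T)"

lemma SS_memI: "A \<subseteq># T \<Longrightarrow> z = int (sum_mset A) mod N \<Longrightarrow> z \<in> SS N T"
  unfolding SS_def by blast

lemma SS_sub: "0 < N \<Longrightarrow> SS N T \<subseteq> {0..<N}"
  unfolding SS_def by auto

lemma negs_sub: "0 < N \<Longrightarrow> negs N X \<subseteq> {0..<N}"
  unfolding negs_def by auto

lemma MM_sub: "0 < N \<Longrightarrow> MM N T \<subseteq> {0..<N}"
  unfolding MM_def using SS_sub negs_sub by blast

lemma finite_MM: "0 < N \<Longrightarrow> finite (MM N T)"
  using MM_sub finite_subset[of "MM N T" "{0..<N}"] by auto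

lemma finite_SS: "0 < N \<Longrightarrow> finite (SS N T)"
  using SS_sub finite_subset[of "SS N T" "{0..<N}"] by auto

lemma SS_0: "0 \<in> SS N T"
  by (rule SS_memI[of "{#}"]) auto

lemma MM_0: "0 \<in> MM N T"
  unfolding MM_def using SS_0 by blast

lemma SS_mono: "T' \<subseteq># T \<Longrightarrow> SS N T' \<subseteq> SS N T"
  unfolding SS_def by (auto intro: subset_mset.order_trans)

lemma MM_mono: "T' \<subseteq># T \<Longrightarrow> MM N T' \<subseteq> MM N T"
  unfolding MM_def negs_def using SS_mono by blast

lemma neg_inj: "0 < N \<Longrightarrow> inj_on (\<lambda>x::int. (-x) mod N) {0..<N}"
proof (rule inj_onI)
  fix x y assume N: "0 < N" and xy: "x \<in> {0..<N}" "y \<in> {0..<N}" "(-x) mod N = (-y) mod N"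
  have "(- (-x)) mod N = (- (-y)) mod N" using xy(3) by (metis mod_minus_eq)
  thus "x = y" using xy(1,2) by simp
qed

lemma card_negs: "0 < N \<Longrightarrow> X \<subseteq> {0..<N} \<Longrightarrow> card (negs N X) = card X"
  unfolding negs_def using neg_inj by (metis card_image inj_on_subset)

lemma diff_mod_lemma: "((a::int) mod N + (- (b mod N)) mod N) mod N = (a - b) mod N"
proof -
  have "((a::int) mod N + (- (b mod N)) mod N) mod N = (a + - (b mod N)) mod N"
    by (simp add: mod_add_eq)
  also have "\<dots> = (a - b mod N) mod N" by simp
  also have "\<dots> = (a - b) mod N" by (simp add: mod_diff_right_eq)
  finally show ?thesis .
qed

lemma mset_take_sub: "mset (take i xs) \<subseteq># mset xs"
proof -
  have "mset xs = mset (take i xs) + mset (drop i xs)"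
    by (metis append_take_drop_id mset_append)
  thus ?thesis by (metis mset_subset_eq_add_left)
qed

lemma mset_drop_sub: "mset (drop i xs) \<subseteq># mset xs"
proof -
  have "mset xs = mset (take i xs) + mset (drop i xs)"
    by (metis append_take_drop_id mset_append)
  thus ?thesis by (metis mset_subset_eq_add_right)
qed

lemma block_sub: "mset (drop i (take j xs)) \<subseteq># mset xs"
  using mset_drop_sub mset_take_sub subset_mset.order_trans by blast

lemma take_split_sum: "i \<le> j \<Longrightarrow> sum_list (take j xs) = sum_list (take i xs) + sum_list (drop i (take j xs))"
proof -
  assume "i \<le> j"
  hence "take i (take j xs) = take i xs" by (simp add: min_absorb1)
  hence "take j xs = take i xs @ drop i (take j xs)" by (metis append_take_drop_id)
  thus ?thesis by (metis sum_list_append)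
qed

lemma ps_card:
  fixes xs :: "nat list"
  assumes k: "1 \<le> k" and hn: "2^(k-1) \<notin> MM (2^k) (mset xs)" and q: "q \<le> length xs"
    and inj: "inj_on (\<lambda>i. int (sum_list (take i xs)) mod 2^k) {0..q}"
  shows "2*q + 1 \<le> card (MM (2^k) (mset xs))"
proof -
  define N :: int where "N = 2^k"
  have Npos: "0 < N" using N_def by simp
  define ps where "ps = (\<lambda>i. int (sum_list (take i xs)) mod N)"
  define U where "U = ps ` {0..q}"
  define V where "V = negs N U"
  have cardU: "card U = q + 1" unfolding U_def using inj ps_def N_def by (simp add: card_image)
  have UN: "U \<subseteq> {0..<N}" unfolding U_def ps_def using Npos by auto
  have cardV: "card V = q + 1" unfolding V_def using card_negs[OF Npos UN] cardU by simp
  have VN: "V \<subseteq> {0..<N}" unfolding V_def using negs_sub[OF Npos] by blast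
  have U0: "0 \<in> U" unfolding U_def ps_def by (auto intro!: image_eqI[where x=0])
  have V0: "0 \<in> V" unfolding V_def negs_def using U0 by (auto intro!: image_eqI[where x=0])
  have spsub: "sp N U V \<subseteq> MM N (mset xs)"
  proof
    fix z assume "z \<in> sp N U V"
    then obtain u v where uv: "u \<in> U" "v \<in> V" "z = (u+v) mod N" by (rule sp_memE)
    obtain j where j: "j \<in> {0..q}" "u = ps j" using uv(1) U_def by auto
    obtain w where w: "w \<in> U" "v = (-w) mod N" using uv(2) V_def negs_def by auto
    obtain i where i: "i \<in> {0..q}" "w = ps i" using w(1) U_def by auto
    have z: "z = (int (sum_list (take j xs)) - int (sum_list (take i xs))) mod N"
      using uv(3) j(2) w(2) i(2) ps_def diff_mod_lemma by simp
    show "z \<in> MM N (mset xs)"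
    proof (cases "i \<le> j")
      case True
      have "z = int (sum_list (drop i (take j xs))) mod N"
        using z take_split_sum[OF True, of xs] by simp
      hence "z \<in> SS N (mset xs)"
        by (intro SS_memI[OF block_sub[of i j xs]]) (simp add: sum_mset_sum_list)
      thus ?thesis unfolding MM_def by blast
    next
      case False
      hence ji: "j \<le> i" by simp
      have "z = (- int (sum_list (drop j (take i xs)))) mod N"
        using z take_split_sum[OF ji, of xs] by simp
      moreover have "int (sum_list (drop j (take i xs))) mod N \<in> SS N (mset xs)"
        by (intro SS_memI[OF block_sub[of j i xs]]) (simp add: sum_mset_sum_list)
      ultimately have "z \<in> negs N (SS N (mset xs))" unfolding negs_def
        by (auto intro!: image_eqI[where x="int (sum_list (drop j (take i xs))) mod N"] simp: mod_minus_eq)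
      thus ?thesis unfolding MM_def by blast
    qed
  qed
  have fU: "finite U" unfolding U_def by simp
  have fV: "finite V" unfolding V_def negs_def using fU by simp
  have hn': "2^(k-1) \<notin> sp (2^k) U V" using spsub hn N_def by auto
  have "card U + card V \<le> card (sp (2^k) U V) + 1"
    using kts[OF k fV fU] UN VN U0 V0 hn' N_def by simp
  moreover have "card (sp N U V) \<le> card (MM N (mset xs))"
    using spsub finite_MM[OF Npos] by (simp add: card_mono)
  ultimately show ?thesis using cardU cardV N_def by simp
qed

lemma block_zero:
  assumes "i \<le> j" "int (sum_list (take i xs)) mod 2^k = int (sum_list (take j xs)) mod 2^k"
  shows "sum_list (drop i (take j xs)) mod 2^k = (0::nat)"
proof -
  define a where "a = int (sum_list (take i xs))"
  define d where "d = int (sum_list (drop i (take j xs)))"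
  have "int (sum_list (take j xs)) = a + d" using take_split_sum[OF assms(1), of xs] a_def d_def by simp
  hence h: "(a + d) mod 2^k = a mod 2^k" using assms(2) a_def by simp
  have "d mod 2^k = ((a + d) - a) mod 2^k" by simp
  also have "\<dots> = ((a+d) mod 2^k - a mod 2^k) mod 2^k" by (simp add: mod_diff_eq)
  also have "\<dots> = 0" using h by simp
  finally have "d mod 2^k = 0" .
  hence "int (sum_list (drop i (take j xs)) mod 2^k) = 0" using d_def by (simp add: zmod_int)
  thus ?thesis by simp
qed

lemma sum_mset_diff_sub: "A \<subseteq># P \<Longrightarrow> sum_mset P = sum_mset A + sum_mset (P - A)"
  by (metis subset_mset.add_diff_inverse sum_mset.union)

lemma MM_sub_SS_zero:
  assumes "sum_mset P mod 2^k = (0::nat)"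
  shows "MM (2^k) P \<subseteq> SS (2^k) P"
proof
  fix z assume "z \<in> MM (2^k) P"
  then consider "z \<in> SS (2^k) P" | "z \<in> negs (2^k) (SS (2^k) P)" unfolding MM_def by blast
  then show "z \<in> SS (2^k) P"
  proof cases
    case 1 then show ?thesis .
  next
    case 2
    then obtain A where A: "A \<subseteq># P" "z = (- (int (sum_mset A) mod 2^k)) mod 2^k"
      unfolding negs_def SS_def by auto
    have "int (sum_mset P) = int (sum_mset A) + int (sum_mset (P - A))"
      using sum_mset_diff_sub[OF A(1)] by simp
    moreover have "int (sum_mset P) mod 2^k = 0" using assms by (metis of_nat_0 of_nat_numeral of_nat_power zmod_int)
    ultimately have e: "(int (sum_mset A) + int (sum_mset (P - A))) mod 2^k = 0" by simp
    have "z = (- int (sum_mset A)) mod 2^k" using A(2) by (simp add: mod_minus_eq)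
    also have "\<dots> = ((- int (sum_mset A)) + (int (sum_mset A) + int (sum_mset (P - A)))) mod 2^k"
      using e by (metis add.right_neutral mod_add_right_eq)
    also have "\<dots> = int (sum_mset (P - A)) mod 2^k" by simp
    finally show ?thesis by (intro SS_memI[of "P - A"]) auto
  qed
qed

lemma sp_SS_MM_sub:
  assumes P: "P \<subseteq># T" and Pz: "sum_mset P mod 2^k = (0::nat)"
  shows "sp (2^k) (SS (2^k) P) (MM (2^k) (T - P)) \<subseteq> MM (2^k) T"
proof
  define N :: int where "N = 2^k"
  fix z assume "z \<in> sp (2^k) (SS (2^k) P) (MM (2^k) (T - P))"
  then obtain a b where ab: "a \<in> SS N P" "b \<in> MM N (T - P)" "z = (a+b) mod N"
    unfolding N_def by (rule sp_memE)
  obtain A1 where A1: "A1 \<subseteq># P" "a = int (sum_mset A1) mod N" using ab(1) unfolding SS_def by auto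
  have TP: "P + (T - P) = T" using P by (simp add: subset_mset.add_diff_inverse)
  from ab(2) consider "b \<in> SS N (T - P)" | "b \<in> negs N (SS N (T - P))" unfolding MM_def by blast
  then show "z \<in> MM (2^k) T"
  proof cases
    case 1
    then obtain B1 where B1: "B1 \<subseteq># T - P" "b = int (sum_mset B1) mod N" unfolding SS_def by auto
    have sub: "A1 + B1 \<subseteq># T" using A1(1) B1(1) TP by (metis subset_mset.add_mono)
    have "z = int (sum_mset (A1 + B1)) mod N" using ab(3) A1(2) B1(2) by (simp add: mod_add_eq)
    hence "z \<in> SS N T" by (intro SS_memI[OF sub])
    thus ?thesis unfolding MM_def N_def by blast
  next
    case 2
    then obtain B1 where B1: "B1 \<subseteq># T - P" "b = (- (int (sum_mset B1) mod N)) mod N"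
      unfolding SS_def negs_def by auto
    have sub: "(P - A1) + B1 \<subseteq># T" using B1(1) TP by (metis subset_mset.add_mono diff_subset_eq_self)
    have "int (sum_mset P) = int (sum_mset A1) + int (sum_mset (P - A1))"
      using sum_mset_diff_sub[OF A1(1)] by simp
    moreover have "int (sum_mset P) mod N = 0" using Pz N_def by (metis of_nat_0 of_nat_numeral of_nat_power zmod_int)
    ultimately have e: "(int (sum_mset A1) + int (sum_mset (P - A1))) mod N = 0" by simp
    have "z = (int (sum_mset A1) - int (sum_mset B1)) mod N"
      using ab(3) A1(2) B1(2) diff_mod_lemma by simp
    also have "\<dots> = ((int (sum_mset A1) - int (sum_mset B1)) - (int (sum_mset A1) + int (sum_mset (P - A1)))) mod N"
      using e by (metis diff_zero mod_diff_right_eq)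
    also have "\<dots> = (- int (sum_mset ((P - A1) + B1))) mod N" by (simp add: algebra_simps)
    also have "\<dots> = (- (int (sum_mset ((P - A1) + B1)) mod N)) mod N" by (simp add: mod_minus_eq)
    finally have "z \<in> negs N (SS N T)" unfolding negs_def
      using SS_memI[OF sub, of "int (sum_mset ((P - A1) + B1)) mod N" N] by blast
    thus ?thesis unfolding MM_def N_def by blast
  qed
qed

lemma L_main:
  fixes T :: "nat multiset"
  assumes k: "1 \<le> k" and hn: "2^(k-1) \<notin> MM (2^k) T"
  shows "\<exists>F. sum_mset F \<subseteq># T \<and> (\<forall>A\<in>#F. A \<noteq> {#} \<and> sum_mset A mod 2^k = 0)
             \<and> 2 * size T + 1 \<le> card (MM (2^k) T) + 2 * size F"
  using hn
proof (induction "size T" arbitrary: T rule: less_induct)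
  case less
  define N :: int where "N = 2^k"
  have Npos: "0 < N" using N_def by simp
  show ?case
  proof (cases "\<exists>A. A \<subseteq># T \<and> A \<noteq> {#} \<and> sum_mset A mod 2^k = 0")
    case True
    define Q where "Q = (\<lambda>A. A \<subseteq># T \<and> A \<noteq> {#} \<and> sum_mset A mod 2^k = (0::nat))"
    from True obtain A0 where A0: "A0 \<subseteq># T" "A0 \<noteq> {#}" "sum_mset A0 mod 2^k = 0" by auto
    have "Q A0" unfolding Q_def using A0 by simp
    then have "\<exists>P. Q P \<and> (\<forall>A. Q A \<longrightarrow> size P \<le> size A)" by (rule ex_has_least_nat)
    then obtain P where PQ: "Q P" and Pmin0: "\<forall>A. Q A \<longrightarrow> size P \<le> size A" by blast
    have P: "P \<subseteq># T" "P \<noteq> {#}" "sum_mset P mod 2^k = 0" using PQ unfolding Q_def by auto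
    have Pmin: "\<And>A. A \<subseteq># T \<and> A \<noteq> {#} \<and> sum_mset A mod 2^k = 0 \<Longrightarrow> size P \<le> size A"
      using Pmin0 by (simp add: Q_def)
    define T' where "T' = T - P"
    have sizeT: "size T = size T' + size P" unfolding T'_def using P(1) size_mset_mono[OF P(1)]
      by (simp add: size_Diff_submset)
    have sizeP: "1 \<le> size P" using P(2) by (cases P) auto
    have lt: "size T' < size T" using sizeT sizeP by simp
    have hn': "2^(k-1) \<notin> MM (2^k) T'"
      using less.prems MM_mono[of T' T] unfolding T'_def by (auto simp: diff_subset_eq_self)
    obtain F' where F': "sum_mset F' \<subseteq># T'" "\<forall>A\<in>#F'. A \<noteq> {#} \<and> sum_mset A mod 2^k = 0"
      "2 * size T' + 1 \<le> card (MM (2^k) T') + 2 * size F'"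
      using less.hyps[OF lt hn'] by blast
    define F where "F = add_mset P F'"
    have TP: "P + T' = T" unfolding T'_def using P(1) by (simp add: subset_mset.add_diff_inverse)
    have "P + sum_mset F' \<subseteq># P + T'" using F'(1) by (rule subset_mset.add_left_mono)
    hence Fsub: "sum_mset F \<subseteq># T" unfolding F_def using TP by simp
    have Fparts: "\<forall>A\<in>#F. A \<noteq> {#} \<and> sum_mset A mod 2^k = 0" using F'(2) P F_def by auto
    obtain xs where xs: "mset xs = P" using ex_mset by blast
    have lenxs: "length xs = size P" using xs by (metis size_mset)
    define q where "q = length xs - 1"
    have qle: "q \<le> length xs" unfolding q_def by simp
    have inj: "inj_on (\<lambda>i. int (sum_list (take i xs)) mod 2^k) {0..q}"
    proof (rule inj_onI)
      fix i j assume ij: "i \<in> {0..q}" "j \<in> {0..q}"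
        and eq: "int (sum_list (take i xs)) mod 2^k = int (sum_list (take j xs)) mod 2^k"
      show "i = j"
      proof (rule ccontr)
        assume "i \<noteq> j"
        then consider "i < j" | "j < i" by linarith
        then show False
        proof cases
          case 1
          define B where "B = mset (drop i (take j xs))"
          have Bz: "sum_mset B mod 2^k = 0" unfolding B_def using block_zero[OF less_imp_le[OF 1] eq]
            by (simp add: sum_mset_sum_list)
          have Bsub: "B \<subseteq># T" unfolding B_def using block_sub[of i j xs] xs P(1)
            by (metis subset_mset.order_trans)
          have jl: "j < length xs" using ij(2) q_def sizeP lenxs by auto
          have sB: "size B = j - i" unfolding B_def using jl by simp
          hence "B \<noteq> {#}" using 1 by auto
          hence "size P \<le> size B" using Bsub Bz by (intro Pmin) simp
          thus False using sB lenxs jl by linarith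
        next
          case 2
          define B where "B = mset (drop j (take i xs))"
          have Bz: "sum_mset B mod 2^k = 0" unfolding B_def using block_zero[OF less_imp_le[OF 2] eq[symmetric]]
            by (simp add: sum_mset_sum_list)
          have Bsub: "B \<subseteq># T" unfolding B_def using block_sub[of j i xs] xs P(1)
            by (metis subset_mset.order_trans)
          have il: "i < length xs" using ij(1) q_def sizeP lenxs by auto
          have sB: "size B = i - j" unfolding B_def using il by simp
          hence "B \<noteq> {#}" using 2 by auto
          hence "size P \<le> size B" using Bsub Bz by (intro Pmin) simp
          thus False using sB lenxs il by linarith
        qed
      qed
    qed
    have hnP: "2^(k-1) \<notin> MM (2^k) (mset xs)" using less.prems MM_mono[OF P(1)] xs by auto
    have c1: "2*q + 1 \<le> card (MM (2^k) (mset xs))" using ps_card[OF k hnP qle inj] .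
    have c2: "card (MM (2^k) P) \<le> card (SS (2^k) P)"
      using MM_sub_SS_zero[OF P(3)] finite_SS[of "2^k" P] by (simp add: card_mono)
    have cSS: "2 * size P \<le> card (SS (2^k) P) + 1" using c1 c2 xs q_def lenxs sizeP by simp
    have spsub: "sp (2^k) (SS (2^k) P) (MM (2^k) T') \<subseteq> MM (2^k) T"
      using sp_SS_MM_sub[OF P(1) P(3)] T'_def by simp
    have kt: "card (SS (2^k) P) + card (MM (2^k) T') \<le> card (sp (2^k) (SS (2^k) P) (MM (2^k) T')) + 1"
    proof (rule kts[OF k])
      show "finite (MM (2^k) T')" using finite_MM[of "2^k"] by simp
      show "finite (SS (2^k) P)" using finite_SS[of "2^k"] by simp
      show "SS (2^k) P \<subseteq> {0..<2^k}" using SS_sub[of "2^k"] by simp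
      show "MM (2^k) T' \<subseteq> {0..<2^k}" using MM_sub[of "2^k"] by simp
      show "0 \<in> SS (2^k) P" by (rule SS_0)
      show "0 \<in> MM (2^k) T'" by (rule MM_0)
      show "2^(k-1) \<notin> sp (2^k) (SS (2^k) P) (MM (2^k) T')" using spsub less.prems by (meson subsetD)
    qed
    have "card (sp (2^k) (SS (2^k) P) (MM (2^k) T')) \<le> card (MM (2^k) T)"
      using spsub finite_MM[of "2^k" T] by (simp add: card_mono)
    hence "2 * size T + 1 \<le> card (MM (2^k) T) + 2 * size F"
      using kt cSS F'(3) sizeT F_def by simp
    thus ?thesis using Fsub Fparts by (intro exI[of _ F]) simp
  next
    case False
    note nz = False
    obtain xs where xs: "mset xs = T" using ex_mset by blast
    have inj: "inj_on (\<lambda>i. int (sum_list (take i xs)) mod 2^k) {0..length xs}"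
    proof (rule inj_onI)
      fix i j assume ij: "i \<in> {0..length xs}" "j \<in> {0..length xs}"
        and eq: "int (sum_list (take i xs)) mod 2^k = int (sum_list (take j xs)) mod 2^k"
      show "i = j"
      proof (rule ccontr)
        assume "i \<noteq> j"
        then consider "i < j" | "j < i" by linarith
        then show False
        proof cases
          case 1
          define B where "B = mset (drop i (take j xs))"
          have Bz: "sum_mset B mod 2^k = 0" unfolding B_def using block_zero[OF less_imp_le[OF 1] eq]
            by (simp add: sum_mset_sum_list)
          have Bsub: "B \<subseteq># T" unfolding B_def using block_sub[of i j xs] xs by simp
          have "size B = j - i" unfolding B_def using ij by simp
          hence "B \<noteq> {#}" using 1 by auto
          hence "\<exists>A. A \<subseteq># T \<and> A \<noteq> {#} \<and> sum_mset A mod 2^k = 0" using Bsub Bz by (intro exI[of _ B]) simp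
          thus False by (rule notE[OF nz])
        next
          case 2
          define B where "B = mset (drop j (take i xs))"
          have Bz: "sum_mset B mod 2^k = 0" unfolding B_def using block_zero[OF less_imp_le[OF 2] eq[symmetric]]
            by (simp add: sum_mset_sum_list)
          have Bsub: "B \<subseteq># T" unfolding B_def using block_sub[of j i xs] xs by simp
          have "size B = i - j" unfolding B_def using ij by simp
          hence "B \<noteq> {#}" using 2 by auto
          hence "\<exists>A. A \<subseteq># T \<and> A \<noteq> {#} \<and> sum_mset A mod 2^k = 0" using Bsub Bz by (intro exI[of _ B]) simp
          thus False by (rule notE[OF nz])
        qed
      qed
    qed
    have hnT: "2^(k-1) \<notin> MM (2^k) (mset xs)" using less.prems xs by simp
    have "2 * length xs + 1 \<le> card (MM (2^k) (mset xs))" using ps_card[OF k hnT le_refl inj] .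
    moreover have "size T = length xs" using xs by (metis size_mset)
    ultimately have "2 * size T + 1 \<le> card (MM (2^k) T) + 2 * size ({#}::nat multiset multiset)"
      using xs by simp
    thus ?thesis by (intro exI[of _ "{#}"]) simp
  qed
qed

lemma card_MM_le:
  assumes k: "1 \<le> k" and hn: "2^(k-1) \<notin> MM (2^k) T"
  shows "card (MM (2^k) T) + 1 \<le> 2^k"
proof -
  have "MM (2^k) T \<subseteq> {0..<2^k} - {2^(k-1)}" using MM_sub[of "2^k" T] hn by auto
  hence "card (MM (2^k) T) \<le> card ({0..<(2::int)^k} - {2^(k-1)})" by (intro card_mono) auto
  also have "\<dots> = card {0..<(2::int)^k} - 1" using k by (simp add: card_Diff_singleton)
  also have "\<dots> = 2^k - 1" by (simp add: nat_power_eq)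
  finally have "card (MM (2^k) T) \<le> 2^k - 1" .
  moreover have "(0::nat) < 2^k" by simp
  ultimately show ?thesis by linarith
qed

lemma L_final:
  fixes T :: "nat multiset"
  assumes k: "1 \<le> k" and hT: "\<forall>A. A \<subseteq># T \<longrightarrow> sum_mset A mod 2^k \<noteq> 2^(k-1)"
  shows "\<exists>F. sum_mset F \<subseteq># T \<and> (\<forall>A\<in>#F. A \<noteq> {#} \<and> sum_mset A mod 2^k = 0)
             \<and> size T + 1 \<le> size F + 2^(k-1)"
proof -
  have hn: "2^(k-1) \<notin> MM (2^k) T"
  proof
    assume "2^(k-1) \<in> MM (2^k) T"
    then consider "(2::int)^(k-1) \<in> SS (2^k) T" | "(2::int)^(k-1) \<in> negs (2^k) (SS (2^k) T)"
      unfolding MM_def by blast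
    then show False
    proof cases
      case 1
      then obtain A where A: "A \<subseteq># T" "2^(k-1) = int (sum_mset A) mod 2^k" unfolding SS_def by auto
      hence "int (sum_mset A mod 2^k) = int (2^(k-1))" by (simp add: zmod_int)
      hence "sum_mset A mod 2^k = 2^(k-1)" by (simp only: of_nat_eq_iff)
      thus False using hT A(1) by simp
    next
      case 2
      then obtain A where A: "A \<subseteq># T" "2^(k-1) = (- (int (sum_mset A) mod 2^k)) mod 2^k"
        unfolding SS_def negs_def by auto
      define hh :: int where "hh = 2^(k-1)"
      have kk: "(2::int)^k = 2 * hh" using k hh_def by (cases k) auto
      have hh0: "0 \<le> hh" "hh < 2^k" using kk hh_def by auto
      have "(uminus hh) mod 2^k = (uminus ((uminus (int (sum_mset A) mod 2^k)) mod 2^k)) mod 2^k"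
        using A(2) hh_def by simp
      also have "\<dots> = int (sum_mset A) mod 2^k" by (simp add: mod_minus_eq)
      finally have e0: "(uminus hh) mod 2^k = int (sum_mset A) mod 2^k" .
      have "uminus hh = hh + (-1) * 2^k" using kk by simp
      hence "(uminus hh) mod 2^k = hh mod 2^k" by (metis mod_mult_self1)
      also have "\<dots> = hh" using hh0 by simp
      finally have e: "int (sum_mset A) mod 2^k = 2^(k-1)" using e0 hh_def by simp
      with e have "int (sum_mset A mod 2^k) = int (2^(k-1))" by (simp add: zmod_int)
      hence "sum_mset A mod 2^k = 2^(k-1)" by (simp only: of_nat_eq_iff)
      thus False using hT A(1) by simp
    qed
  qed
  obtain F where F: "sum_mset F \<subseteq># T" "\<forall>A\<in>#F. A \<noteq> {#} \<and> sum_mset A mod 2^k = 0"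
    "2 * size T + 1 \<le> card (MM (2^k) T) + 2 * size F" using L_main[OF k hn] by blast
  have "card (MM (2^k) T) + 1 \<le> 2^k" using card_MM_le[OF k hn] .
  moreover have "(2::nat)^k = 2 * 2^(k-1)" using k by (cases k) auto
  ultimately have "size T + 1 \<le> size F + 2^(k-1)" using F(3) by linarith
  thus ?thesis using F(1,2) by (intro exI[of _ F]) simp
qed

declare Iset.simps[simp del]

lemma image_mset_sub_lift: "U \<subseteq># image_mset g M \<Longrightarrow> \<exists>M'. M' \<subseteq># M \<and> U = image_mset g M'"
proof (induction M arbitrary: U)
  case empty
  hence U0: "U = {#}" by simp
  show ?case
  proof (rule exI[where x="{#}"])
    show "{#} \<subseteq># {#} \<and> U = image_mset g {#}" using U0 by simp
  qed
next
  case (add a M)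
  show ?case
  proof (cases "g a \<in># U")
    case True
    from multi_member_split[OF True] obtain U' where U': "U = add_mset (g a) U'" ..
    have "add_mset (g a) U' \<subseteq># add_mset (g a) (image_mset g M)" using add.prems U' by simp
    hence "U' \<subseteq># image_mset g M" by (simp only: mset_subset_eq_add_mset_cancel)
    from add.IH[OF this] obtain M' where M': "M' \<subseteq># M" "U' = image_mset g M'" by (elim exE conjE)
    show ?thesis
    proof (rule exI[where x="add_mset a M'"])
      have "add_mset a M' \<subseteq># add_mset a M" using M'(1) by (simp only: mset_subset_eq_add_mset_cancel)
      moreover have "U = image_mset g (add_mset a M')" using U' M'(2) by simp
      ultimately show "add_mset a M' \<subseteq># add_mset a M \<and> U = image_mset g (add_mset a M')" ..
    qed
  next
    case False
    have "U - {#g a#} \<subseteq># image_mset g M" using add.prems by (simp add: subset_eq_diff_conv)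
    moreover have "U - {#g a#} = U" using False by (rule diff_single_trivial)
    ultimately have "U \<subseteq># image_mset g M" by simp
    from add.IH[OF this] obtain M' where M': "M' \<subseteq># M" "U = image_mset g M'" by (elim exE conjE)
    have "M \<subseteq># add_mset a M" by (rule subset_mset.less_imp_le[OF multi_psub_of_add_self])
    hence "M' \<subseteq># add_mset a M" using M'(1) by (meson subset_mset.order_trans)
    thus ?thesis using M'(2) by (intro exI[where x=M'] conjI)
  qed
qed

lemma sum_mset_sub_mono:
  fixes F1 F :: "'a multiset multiset"
  assumes "F1 \<subseteq># F" shows "sum_mset F1 \<subseteq># sum_mset F"
proof -
  have "F = F1 + (F - F1)" using assms by (simp add: subset_mset.add_diff_inverse)
  hence "sum_mset F = sum_mset F1 + sum_mset (F - F1)" by (simp only: sum_mset.union[symmetric])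
  thus ?thesis by (simp only: mset_subset_eq_add_left)
qed

lemma sum_mset_mod_nat: "(\<Sum>A\<in>#F. f A mod m) mod m = (\<Sum>A\<in>#F. f A) mod (m::nat)"
proof (induction F)
  case empty then show ?case by simp
next
  case (add a F)
  have "(\<Sum>A\<in>#add_mset a F. f A mod m) mod m = (f a mod m + (\<Sum>A\<in>#F. f A mod m)) mod m" by simp
  also have "\<dots> = (f a mod m + (\<Sum>A\<in>#F. f A mod m) mod m) mod m" by (simp add: mod_add_right_eq)
  also have "\<dots> = (f a mod m + (\<Sum>A\<in>#F. f A) mod m) mod m" using add.IH by simp
  also have "\<dots> = (f a + (\<Sum>A\<in>#F. f A)) mod m" by (simp add: mod_add_eq)
  finally show ?case by simp
qed

lemma sum_sum_mset: "sum_mset (sum_mset F) = (\<Sum>A\<in>#F. sum_mset A)"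
  for F :: "nat multiset multiset"
  by (induction F) auto

lemma dvd_sum_mset_nat: "(\<And>A. A \<in># F \<Longrightarrow> (c::nat) dvd f A) \<Longrightarrow> c dvd (\<Sum>A\<in>#F. f A)"
  by (induction F) auto

lemma Iset_le1: "d \<le> 1 \<Longrightarrow> Iset d = {}"
  by (subst Iset.simps) simp

lemma Iset_rec: "2 \<le> d \<Longrightarrow> Iset d = {1..floor_log d} \<union> (\<lambda>j. j + floor_log d + 1) ` Iset (d - 2 ^ floor_log d + 1)"
  by (subst Iset.simps) simp

lemma floor_log_facts:
  assumes "2 \<le> d"
  shows "1 \<le> floor_log d" "2 ^ floor_log d \<le> d" "d < 2 * 2 ^ floor_log d"
proof -
  show "1 \<le> floor_log d" using floor_log_rec[OF assms] by simp
  show "2 ^ floor_log d \<le> d" using assms floor_log_exp2_le by simp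
  show "d < 2 * 2 ^ floor_log d" using floor_log_exp2_gt by simp
qed

lemma Iset_pos: "i \<in> Iset d \<Longrightarrow> 1 \<le> i"
proof (induction d arbitrary: i rule: less_induct)
  case (less d)
  show ?case
  proof (cases "2 \<le> d")
    case False
    thus ?thesis using less.prems Iset_le1[of d] by simp
  next
    case True
    from less.prems[unfolded Iset_rec[OF True]] show ?thesis by auto
  qed
qed

lemma pow_ge: "2 \<le> m \<Longrightarrow> m + 2 \<le> (2::nat)^m"
proof (induction m rule: dec_induct)
  case base then show ?case by simp
next
  case (step m) then show ?case by simp
qed

lemma Iset_bound: "i \<in> Iset d \<Longrightarrow> i \<le> d"
proof (induction d arbitrary: i rule: less_induct)
  case (less d)
  show ?case
  proof (cases "2 \<le> d")
    case False
    thus ?thesis using less.prems Iset_le1[of d] by simp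
  next
    case True
    define l where "l = floor_log d"
    define d' where "d' = d - 2^l + 1"
    have f: "1 \<le> l" "2^l \<le> d" "d < 2 * 2^l" using floor_log_facts[OF True] l_def by auto
    have "(2::nat)^1 \<le> 2^l" using f(1) by (rule power_increasing) simp
    hence two: "2 \<le> (2::nat)^l" by simp
    have d'lt: "d' < d" using f two unfolding d'_def by linarith
    have "i \<in> {1..l} \<union> (\<lambda>j. j + l + 1) ` Iset d'" using less.prems Iset_rec[OF True] l_def d'_def by simp
    then show ?thesis
    proof (elim UnE imageE)
      assume "i \<in> {1..l}"
      hence "i \<le> l" by simp
      moreover have "l < 2^l" by (simp add: less_exp)
      ultimately show ?thesis using f(2) by linarith
    next
      fix j assume j: "j \<in> Iset d'" "i = j + l + 1"
      have jd': "j \<le> d'" using less.IH[OF d'lt j(1)] .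
      show ?thesis
      proof (cases "l = 1")
        case True
        hence dd: "d' = d - 1" "d \<le> 3" using d'_def f by auto
        hence "d' \<le> 2" by simp
        have "j \<le> d' - 1"
        proof (cases "d' \<le> 1")
          case True thus ?thesis using j(1) Iset_le1 by auto
        next
          case False
          hence d2: "d' = 2" using \<open>d' \<le> 2\<close> by simp
          have "floor_log (2::nat) = 1" using floor_log_rec[of 2] by simp
          hence "Iset 2 = {1}" using Iset_rec[of 2] Iset_le1[of 1] by simp
          thus ?thesis using j(1) d2 by simp
        qed
        thus ?thesis using j(2) True dd d'lt f(2) by simp
      next
        case False
        hence "2 \<le> l" using f by simp
        hence "l + 2 \<le> 2^l" by (rule pow_ge)
        thus ?thesis using j(2) jd' d'_def f by linarith
      qed
    qed
  qed
qed


lemma subsumsI: "A \<subseteq># S \<Longrightarrow> A \<noteq> {#} \<Longrightarrow> sum_mset A mod 2^n \<in> subsums n S"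
  unfolding subsums_def by auto

lemma layer_eq: "i \<le> n \<Longrightarrow> layer n i = {x. x < 2^n \<and> x mod 2^i = 2^(i-1)}"
proof -
  assume "i \<le> n"
  hence "i \<noteq> n + 1" by simp
  thus ?thesis unfolding layer_def by (simp only: if_False)
qed

lemma layer_char: "i \<le> n \<Longrightarrow> x \<in> layer n i \<Longrightarrow> x < 2^n \<and> x mod 2^i = 2^(i-1)"
  using layer_eq by simp

lemma layerI: "i \<le> n \<Longrightarrow> x < 2^n \<Longrightarrow> x mod 2^i = 2^(i-1) \<Longrightarrow> x \<in> layer n i"
  using layer_eq by simp

lemma mem_sum_mset_sub: "A \<in># F \<Longrightarrow> A \<subseteq># sum_mset F"
proof -
  assume "A \<in># F"
  from multi_member_split[OF this] obtain F' where "F = add_mset A F'" ..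
  hence "sum_mset F = A + sum_mset F'" by simp
  thus ?thesis by (simp only: mset_subset_eq_add_left)
qed

lemma mod_pow2_cancel: "i \<le> n \<Longrightarrow> (x mod 2^n) mod 2^i = x mod (2::nat)^i"
proof -
  assume "i \<le> n"
  hence "(2::nat)^i dvd 2^n" by (rule le_imp_power_dvd)
  thus ?thesis by (rule mod_mod_cancel)
qed

lemma pow_mod_zero: "i \<le> l \<Longrightarrow> (2::nat)^l mod 2^i = 0"
  by (simp add: le_imp_power_dvd)

lemma main_gen:
  "0 < d \<Longrightarrow> (\<forall>i\<in>Iset d. i \<le> n) \<Longrightarrow> size S = d \<Longrightarrow> set_mset S \<subseteq> {..<2^n}
   \<Longrightarrow> subsums n S \<subseteq> Cset n d \<Longrightarrow> False"
proof (induction d arbitrary: n S rule: less_induct)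
  case (less d)
  have Sne: "S \<noteq> {#}" using less.prems(1,3) by auto
  have inC: "\<exists>i\<in>Iset d. sum_mset A mod 2^n \<in> layer n i" if "A \<subseteq># S" "A \<noteq> {#}" for A
  proof -
    have "sum_mset A mod 2^n \<in> Cset n d" using subsumsI[OF that] less.prems(5) by (rule subsetD[rotated])
    thus ?thesis unfolding Cset_def by simp
  qed
  have ilen: "i \<le> n" if "i \<in> Iset d" for i using less.prems(2) that by simp
  show False
  proof (cases "2 \<le> d")
    case False
    hence "d = 1" using less.prems(1) by simp
    hence "Iset d = {}" using Iset_le1 by simp
    thus False using inC[OF subset_mset.order_refl Sne] by simp
  next
    case True
    define l where "l = floor_log d"
    define k where "k = l + 1"
    define d' where "d' = d - 2^l + 1"
    have f: "1 \<le> l" "2^l \<le> d" "d < 2 * 2^l" using floor_log_facts[OF True] l_def by auto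
    have "(2::nat)^1 \<le> 2^l" using f(1) by (rule power_increasing) simp
    hence two: "2 \<le> (2::nat)^l" by simp
    have d'lt: "d' < d" using f two unfolding d'_def by linarith
    have d'pos: "0 < d'" unfolding d'_def by simp
    have IsetD: "Iset d = {1..l} \<union> (\<lambda>j. j + l + 1) ` Iset d'" using Iset_rec[OF True] l_def d'_def by simp
    have k1: "1 \<le> k" unfolding k_def by simp
    have kl: "k - 1 = l" unfolding k_def by simp
    have H: "\<forall>A. A \<subseteq># S \<longrightarrow> sum_mset A mod 2^k \<noteq> 2^(k-1)"
    proof (intro allI impI notI)
      fix A assume A: "A \<subseteq># S" and e: "sum_mset A mod 2^k = 2^(k-1)"
      have Ane: "A \<noteq> {#}"
      proof
        assume "A = {#}"
        hence "sum_mset A mod 2^k = 0" by simp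
        thus False using e by simp
      qed
      from inC[OF A Ane] obtain i where i: "i \<in> Iset d" "sum_mset A mod 2^n \<in> layer n i" ..
      have "(sum_mset A mod 2^n) mod 2^i = 2^(i-1)" using layer_char[OF ilen[OF i(1)] i(2)] by simp
      hence Ai: "sum_mset A mod 2^i = 2^(i-1)"
        using mod_pow2_cancel[OF ilen[OF i(1)], of "sum_mset A"] by simp
      from i(1)[unfolded IsetD] show False
      proof (elim UnE imageE)
        assume "i \<in> {1..l}"
        hence il: "i \<le> l" "i \<le> k" unfolding k_def by auto
        have "sum_mset A mod 2^i = (sum_mset A mod 2^k) mod 2^i"
          using mod_pow2_cancel[OF il(2), of "sum_mset A"] by simp
        also have "\<dots> = 2^l mod 2^i" using e kl by simp
        also have "\<dots> = 0" using pow_mod_zero[OF il(1)] .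
        finally show False using Ai by simp
      next
        fix j assume j: "j \<in> Iset d'" "i = j + l + 1"
        have j1: "1 \<le> j" using Iset_pos[OF j(1)] .
        have ki: "k \<le> i" "k \<le> i - 1" using j(2) j1 unfolding k_def by auto
        have "sum_mset A mod 2^k = (sum_mset A mod 2^i) mod 2^k"
          using mod_pow2_cancel[OF ki(1), of "sum_mset A"] by simp
        also have "\<dots> = 2^(i-1) mod 2^k" using Ai by simp
        also have "\<dots> = 0" using pow_mod_zero[OF ki(2)] .
        finally show False using e by simp
      qed
    qed
    obtain F where F: "sum_mset F \<subseteq># S" "\<forall>A\<in>#F. A \<noteq> {#} \<and> sum_mset A mod 2^k = 0"
      "size S + 1 \<le> size F + 2^(k-1)" using L_final[OF k1 H] by (elim exE conjE)
    have sizeF: "d' \<le> size F" using F(3) less.prems(3) kl f(2) unfolding d'_def by simp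
    obtain ys where ys: "mset ys = F" using ex_mset by meson
    define F0 where "F0 = mset (take d' ys)"
    have F0F: "F0 \<subseteq># F" unfolding F0_def using mset_take_sub[of d' ys] ys by simp
    have "length ys = size F" using ys size_mset[of ys] by simp
    hence sizeF0: "size F0 = d'" unfolding F0_def using sizeF by simp
    define n' where "n' = n - k"
    define g where "g = (\<lambda>A::nat multiset. (sum_mset A mod 2^n) div 2^k)"
    define S' where "S' = image_mset g F0"
    have sizeS': "size S' = d'" unfolding S'_def using sizeF0 by simp
    have setS': "set_mset S' \<subseteq> {..<2^n'}"
    proof
      fix y assume "y \<in> set_mset S'"
      then obtain A where yA: "y = g A" unfolding S'_def by auto
      have xlt: "sum_mset A mod 2^n < 2^n" by simp
      show "y \<in> {..<2^n'}"
      proof (cases "k \<le> n")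
        case True
        have "(2::nat)^n = 2^n' * 2^k" unfolding n'_def using True by (simp add: power_add[symmetric])
        hence "sum_mset A mod 2^n < 2^n' * 2^k" using xlt by simp
        hence "(sum_mset A mod 2^n) div 2^k < 2^n'" by (simp add: less_mult_imp_div_less)
        thus ?thesis using yA g_def by simp
      next
        case False
        hence "(2::nat)^n \<le> 2^k" by simp
        hence "sum_mset A mod 2^n < 2^k" using xlt by linarith
        hence "(sum_mset A mod 2^n) div 2^k = 0" by (rule div_less)
        thus ?thesis using yA g_def n'_def by simp
      qed
    qed
    have bound': "\<forall>j\<in>Iset d'. j \<le> n'"
    proof
      fix j assume "j \<in> Iset d'"
      hence "j + l + 1 \<in> Iset d" using IsetD by auto
      hence "j + l + 1 \<le> n" using ilen by simp
      thus "j \<le> n'" unfolding n'_def k_def by simp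
    qed
    have subs': "subsums n' S' \<subseteq> Cset n' d'"
    proof
      fix z assume "z \<in> subsums n' S'"
      then obtain U where U: "U \<subseteq># S'" "U \<noteq> {#}" "z = sum_mset U mod 2^n'"
        unfolding subsums_def by auto
      from image_mset_sub_lift[OF U(1)[unfolded S'_def]] obtain F1 where
        F1: "F1 \<subseteq># F0" "U = image_mset g F1" by (elim exE conjE)
      have F1ne: "F1 \<noteq> {#}" using U(2) F1(2) by auto
      have F1F: "F1 \<subseteq># F" using F1(1) F0F by (rule subset_mset.order_trans)
      have parts: "A \<noteq> {#} \<and> sum_mset A mod 2^k = 0" if "A \<in># F1" for A
        using F(2) mset_subset_eqD[OF F1F that] by simp
      define B where "B = sum_mset F1"
      have BS: "B \<subseteq># S" unfolding B_def using sum_mset_sub_mono[OF F1F] F(1)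
        by (rule subset_mset.order_trans)
      have "set_mset F1 \<noteq> {}" using F1ne by simp
      then obtain A0 where A0: "A0 \<in># F1" by blast
      have Bne: "B \<noteq> {#}"
      proof
        assume B0: "B = {#}"
        have "A0 \<subseteq># B" unfolding B_def by (rule mem_sum_mset_sub[OF A0])
        hence "A0 \<subseteq># {#}" using B0 by (simp only:)
        hence "A0 = {#}" by simp
        thus False using parts[OF A0] by simp
      qed
      have sumB: "sum_mset B = (\<Sum>A\<in>#F1. sum_mset A)" unfolding B_def by (rule sum_sum_mset)
      have dvdB: "2^k dvd sum_mset B" unfolding sumB
        by (rule dvd_sum_mset_nat) (use parts in \<open>simp add: mod_eq_0_iff_dvd\<close>)
      from inC[OF BS Bne] obtain i where i: "i \<in> Iset d" "sum_mset B mod 2^n \<in> layer n i" ..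
      have iln: "i \<le> n" using ilen[OF i(1)] .
      have Bi: "sum_mset B mod 2^i = 2^(i-1)"
        using layer_char[OF iln i(2)] mod_pow2_cancel[OF iln, of "sum_mset B"] by simp
      from i(1)[unfolded IsetD] show "z \<in> Cset n' d'"
      proof (elim UnE imageE)
        assume "i \<in> {1..l}"
        hence il: "i \<le> k" "1 \<le> i" unfolding k_def by auto
        have "(2::nat)^i dvd 2^k" using il(1) by (rule le_imp_power_dvd)
        hence "2^i dvd sum_mset B" using dvdB by (rule dvd_trans)
        hence "sum_mset B mod 2^i = 0" by simp
        thus ?thesis using Bi by simp
      next
        fix j assume j: "j \<in> Iset d'" "i = j + l + 1"
        have j1: "1 \<le> j" using Iset_pos[OF j(1)] .
        have ijk: "i = k + j" using j(2) k_def by simp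
        have kn: "k \<le> n" using iln ijk by simp
        have jn': "j \<le> n'" using bound' j(1) by simp
        have gA: "2^k * g A = sum_mset A mod 2^n" if "A \<in># F1" for A
        proof -
          have "2^k dvd sum_mset A" using parts[OF that] by (simp add: mod_eq_0_iff_dvd)
          moreover have "(2::nat)^k dvd 2^n" using kn by (rule le_imp_power_dvd)
          ultimately have "2^k dvd sum_mset A mod 2^n" by (simp add: dvd_mod)
          thus ?thesis unfolding g_def by simp
        qed
        have "2^k * sum_mset U = (\<Sum>A\<in>#F1. 2^k * g A)"
          unfolding F1(2) by (simp add: sum_mset_distrib_left)
        also have "\<dots> = (\<Sum>A\<in>#F1. sum_mset A mod 2^n)"
        proof -
          have "image_mset (\<lambda>A. 2^k * g A) F1 = image_mset (\<lambda>A. sum_mset A mod 2^n) F1"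
            by (rule image_mset_cong) (rule gA)
          thus ?thesis by simp
        qed
        finally have eU: "2^k * sum_mset U = (\<Sum>A\<in>#F1. sum_mset A mod 2^n)" .
        have eB: "(2^k * sum_mset U) mod 2^n = sum_mset B mod 2^n"
          unfolding eU sumB by (rule sum_mset_mod_nat)
        have "(2^k * sum_mset U) mod 2^i = ((2^k * sum_mset U) mod 2^n) mod 2^i"
          using mod_pow2_cancel[OF iln, of "2^k * sum_mset U"] by simp
        also have "\<dots> = (sum_mset B mod 2^n) mod 2^i" using eB by simp
        also have "\<dots> = sum_mset B mod 2^i"
          using mod_pow2_cancel[OF iln, of "sum_mset B"] by simp
        finally have "(2^k * sum_mset U) mod 2^i = sum_mset B mod 2^i" .
        hence e1: "(2^k * sum_mset U) mod (2^k * 2^j) = 2^(i-1)" using Bi ijk by (simp add: power_add)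
        have m1: "(2^k * sum_mset U) mod (2^k * 2^j) = 2^k * (sum_mset U mod 2^j)" by (rule mod_mult_mult1)
        have "i - 1 = k + (j - 1)" using ijk j1 by simp
        hence "(2::nat)^(i-1) = 2^k * 2^(j-1)" by (simp add: power_add)
        hence "2^k * (sum_mset U mod 2^j) = 2^k * 2^(j-1)" using e1 m1 by simp
        hence Uj: "sum_mset U mod 2^j = 2^(j-1)" by simp
        have "z mod 2^j = 2^(j-1)" using U(3) Uj mod_pow2_cancel[OF jn', of "sum_mset U"] by simp
        moreover have "z < 2^n'" using U(3) by simp
        ultimately have "z \<in> layer n' j" by (intro layerI[OF jn'])
        thus ?thesis unfolding Cset_def by (rule UN_I[OF j(1)])
      qed
    qed
    show False using less.IH[OF d'lt d'pos bound' sizeS' setS' subs'] .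
  qed
qed

theorem claim3p1:
  fixes d n :: nat
  assumes "0 < d" and "d \<le> n"
  shows "\<not> (\<exists>S :: nat multiset. size S = d \<and> set_mset S \<subseteq> {..<2^n} \<and> subsums n S \<subseteq> Cset n d)"
proof
  assume "\<exists>S :: nat multiset. size S = d \<and> set_mset S \<subseteq> {..<2^n} \<and> subsums n S \<subseteq> Cset n d"
  then obtain S :: "nat multiset" where S: "size S = d" "set_mset S \<subseteq> {..<2^n}" "subsums n S \<subseteq> Cset n d"
    by (elim exE conjE)
  have "\<forall>i\<in>Iset d. i \<le> n"
  proof
    fix i assume "i \<in> Iset d"
    thus "i \<le> n" using Iset_bound[of i d] assms(2) by linarith
  qed
  thus False using main_gen[OF assms(1) _ S] by simp
qed

end
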